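(* The monoid $\Pi_2=\langle a,b,c\mid (ab^ic)^2=1\ (i\geq 1)\rangle$ has context-free word problem.
   Context: For a monoid $M$ with finite generating set $A$, the word problem of $M$ with respect to $A$ is the language $\{u\#v^{\mathrm{rev}} \mid u,v\in A^\ast,\ u=_M v\}$, where $\#\notin A$ and $v^{\mathrm{rev}}$ is the reversal of $v$. $M$ has context-free word problem if this language is context-free (this is independent of the finite generating set). *)

theory Defs
  imports Main
begin

text \<open>A context-free grammar over terminals of type 't: a finite set of
productions (A, w) with nonterminals represented by natural numbers and
right-hand sides being words over nonterminals (Inl) and terminals (Inr),
together with a start symbol.\<close>

type_synonym 't prod = "nat \<times> (nat + 't) list"

definition derive1 :: "'t prod set \<Rightarrow> (nat + 't) list \<Rightarrow> (nat + 't) list \<Rightarrow> bool" where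
  "derive1 P u v \<longleftrightarrow> (\<exists>x y A w. u = x @ [Inl A] @ y \<and> (A, w) \<in> P \<and> v = x @ w @ y)"

definition cfg_lang :: "'t prod set \<Rightarrow> nat \<Rightarrow> 't list set" where
  "cfg_lang P S = {w. (derive1 P)\<^sup>*\<^sup>* [Inl S] (map Inr w)}"

definition context_free :: "'t list set \<Rightarrow> bool" where
  "context_free L \<longleftrightarrow> (\<exists>P S. finite P \<and> L = cfg_lang P S)"

inductive pres_eq :: "('a list \<times> 'a list) set \<Rightarrow> 'a list \<Rightarrow> 'a list \<Rightarrow> bool"
  for R where
  refl: "pres_eq R u u"
| rel:  "(l, r) \<in> R \<Longrightarrow> pres_eq R (x @ l @ y) (x @ r @ y)"
| sym:  "pres_eq R u v \<Longrightarrow> pres_eq R v u"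
| trans: "pres_eq R u v \<Longrightarrow> pres_eq R v w \<Longrightarrow> pres_eq R u w"

datatype 'a wp_sym = Gen 'a | Hash

definition word_problem :: "('a list \<times> 'a list) set \<Rightarrow> 'a wp_sym list set" where
  "word_problem R = {map Gen u @ [Hash] @ rev (map Gen v) | u v. pres_eq R u v}"

datatype gen = a | b | c

definition Pi2_rels :: "(gen list \<times> gen list) set" where
  "Pi2_rels = {((a # replicate i b @ [c]) @ (a # replicate i b @ [c]), []) | i. i \<ge> 1}"

end

theory Submission
  imports Defs
begin

abbreviation peq where "peq \<equiv> pres_eq Pi2_rels"

definition w1 :: "nat \<Rightarrow> gen list" where "w1 i = a # replicate i b @ [c]"
definition ww :: "nat \<Rightarrow> gen list" where "ww i = w1 i @ w1 i"

lemma Pi2_rels_ww: "Pi2_rels = {(ww i, []) | i. 1 \<le> i}"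
  unfolding Pi2_rels_def ww_def w1_def by auto

lemma peq_ctx: "pres_eq R u v \<Longrightarrow> pres_eq R (x@u@y) (x@v@y)"
proof (induction rule: pres_eq.induct)
  case (rel l r x' y')
  then show ?case by (metis append.assoc pres_eq.rel)
qed (auto intro: pres_eq.intros)

lemma peq_app: "pres_eq R u u' \<Longrightarrow> pres_eq R v v' \<Longrightarrow> pres_eq R (u@v) (u'@v')"
  by (metis append.right_neutral append_Nil peq_ctx pres_eq.trans)

lemma peq_cons: "pres_eq R u v \<Longrightarrow> pres_eq R (x#u) (x#v)"
  using peq_ctx[of R u v "[x]" "[]"] by simp

lemma peq_ww: "1 \<le> i \<Longrightarrow> peq (ww i) []"
  using pres_eq.rel[of "ww i" "[]" Pi2_rels "[]" "[]"] by (auto simp: Pi2_rels_ww)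

inductive_set DL :: "gen list set" and ZL :: "gen list set" where
  DL_nil: "[] \<in> DL"
| DL_app: "x \<in> DL \<Longrightarrow> y \<in> DL \<Longrightarrow> x @ y \<in> DL"
| DL_T: "d \<in> DL \<Longrightarrow> z \<in> ZL \<Longrightarrow> a # d @ z @ [c] \<in> DL"
| ZL_base: "d1 \<in> DL \<Longrightarrow> d2 \<in> DL \<Longrightarrow> d3 \<in> DL \<Longrightarrow> d4 \<in> DL \<Longrightarrow> b # d1 @ c # d2 @ a # d3 @ b # d4 \<in> ZL"
| ZL_step: "d1 \<in> DL \<Longrightarrow> z \<in> ZL \<Longrightarrow> d2 \<in> DL \<Longrightarrow> b # d1 @ z @ b # d2 \<in> ZL"

lemma DL_ZL_sound:
  shows "d \<in> DL \<Longrightarrow> peq d []"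
    and "z \<in> ZL \<Longrightarrow> (\<exists>i\<ge>1. peq z (replicate i b @ c # a # replicate i b))"
proof (induction rule: DL_ZL.inducts)
  case DL_nil
  then show ?case by (rule pres_eq.refl)
next
  case (DL_app x y)
  then show ?case using peq_app by fastforce
next
  case (DL_T d z)
  then obtain i where i: "i \<ge> 1" "peq z (replicate i b @ c # a # replicate i b)" by blast
  have "peq (a # d @ z @ [c]) (a # [] @ (replicate i b @ c # a # replicate i b) @ [c])"
    by (intro peq_cons peq_app DL_T i pres_eq.refl)
  also have "a # [] @ (replicate i b @ c # a # replicate i b) @ [c] = ww i"
    by (simp add: ww_def w1_def)
  finally show ?case using peq_ww[OF i(1)] pres_eq.trans by blast
next
  case (ZL_base d1 d2 d3 d4)
  have "peq (b # d1 @ c # d2 @ a # d3 @ b # d4) (b # [] @ c # [] @ a # [] @ b # [])"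
    by (intro peq_cons peq_app ZL_base pres_eq.refl)
  then show ?case by (intro exI[of _ 1]) simp
next
  case (ZL_step d1 z d2)
  then obtain i where i: "i \<ge> 1" "peq z (replicate i b @ c # a # replicate i b)" by blast
  have "peq (b # d1 @ z @ b # d2) (b # [] @ (replicate i b @ c # a # replicate i b) @ b # [])"
    by (intro peq_cons peq_app ZL_step i pres_eq.refl)
  moreover have "b # [] @ (replicate i b @ c # a # replicate i b) @ b # [] =
     replicate (Suc i) b @ c # a # replicate (Suc i) b"
    by (simp add: replicate_append_same[symmetric] del: replicate_append_same)
  ultimately show ?case by (intro exI[of _ "Suc i"]) auto
qed

inductive shw :: "gen list \<Rightarrow> gen list \<Rightarrow> bool" where
  shw_nil: "d \<in> DL \<Longrightarrow> shw d []"
| shw_cons: "d \<in> DL \<Longrightarrow> shw w z \<Longrightarrow> shw (d @ x # w) (x # z)"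

lemma shw_sound: "shw u z \<Longrightarrow> peq u z"
proof (induction rule: shw.induct)
  case (shw_nil d) then show ?case using DL_ZL_sound(1) by blast
next
  case (shw_cons d w z x)
  have "peq (d @ x # w) ([] @ x # z)"
    by (intro peq_app peq_cons shw_cons DL_ZL_sound(1))
  then show ?case by simp
qed

lemma shw_prepend: "d \<in> DL \<Longrightarrow> shw w s \<Longrightarrow> shw (d @ w) s"
  by (erule shw.cases) (auto intro: shw.intros DL_app simp del: append_assoc simp: append_assoc[symmetric])

lemma shw_append: "shw u1 t \<Longrightarrow> shw u2 s \<Longrightarrow> shw (u1@u2) (t@s)"
  by (induction rule: shw.induct) (auto intro: shw.intros shw_prepend)

lemma shw_split: "shw u (t@s) \<Longrightarrow> \<exists>u1 u2. u = u1 @ u2 \<and> shw u1 t \<and> shw u2 s"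
proof (induction t arbitrary: u)
  case Nil
  then show ?case by (metis DL_nil append_Nil shw_nil)
next
  case (Cons x t)
  from Cons.prems obtain d w where "u = d @ x # w" "d \<in> DL" "shw w (t @ s)"
    by (auto elim: shw.cases)
  with Cons.IH show ?case by (metis append.assoc append_Cons shw_cons)
qed

lemma shw_single: "shw u [x] \<Longrightarrow> \<exists>d1 d2. u = d1 @ x # d2 \<and> d1 \<in> DL \<and> d2 \<in> DL"
  by (auto elim!: shw.cases)

lemma shw_DL: "shw u [] \<Longrightarrow> u \<in> DL" by (auto elim: shw.cases)

lemma Zlem: "1 \<le> i \<Longrightarrow> shw p (replicate i b) \<Longrightarrow> shw q (replicate i b) \<Longrightarrow> m \<in> DL \<Longrightarrow>
   \<exists>d z. p @ c # m @ a # q = d @ z \<and> d \<in> DL \<and> z \<in> ZL"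
proof (induction i arbitrary: p q rule: nat_induct_at_least)
  case base
  from base(1) obtain d0 d1 where p: "p = d0 @ b # d1" "d0 \<in> DL" "d1 \<in> DL"
    using shw_single by fastforce
  from base(2) obtain e0 e1 where q: "q = e0 @ b # e1" "e0 \<in> DL" "e1 \<in> DL"
    using shw_single by fastforce
  show ?case
    by (rule exI[of _ d0], rule exI[of _ "b # d1 @ c # m @ a # e0 @ b # e1"])
       (simp add: p q ZL_base base)
next
  case (Suc j)
  have "shw p ([b] @ replicate j b)" using Suc.prems(1) by simp
  then obtain p1 p' where "p = p1 @ p'" "shw p1 [b]" "shw p' (replicate j b)"
    using shw_split by blast
  then obtain d0 d1 where p: "p = d0 @ b # d1 @ p'" "d0 \<in> DL" "d1 \<in> DL" "shw p' (replicate j b)"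
    using shw_single by fastforce
  have p2: "shw (d1 @ p') (replicate j b)" using p shw_prepend by blast
  have "shw q (replicate j b @ [b])" using Suc.prems(2)
    by (simp add: replicate_append_same)
  then obtain q' q2 where "q = q' @ q2" "shw q' (replicate j b)" "shw q2 [b]"
    using shw_split by blast
  then obtain e0 e1 where q: "q = q' @ e0 @ b # e1" "e0 \<in> DL" "e1 \<in> DL" "shw q' (replicate j b)"
    using shw_single by fastforce
  have q2: "shw (q' @ e0) (replicate j b)" using shw_append[OF q(4) shw_nil[OF q(2)]] by simp
  obtain d z where dz: "(d1 @ p') @ c # m @ a # (q' @ e0) = d @ z" "d \<in> DL" "z \<in> ZL"
    using Suc.IH[OF p2 q2 Suc.prems(3)] by blast
  have "p @ c # m @ a # q = d0 @ b # ((d1 @ p') @ c # m @ a # (q' @ e0)) @ b # e1"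
    using p q by simp
  also have "\<dots> = d0 @ (b # d @ z @ b # e1)" using dz by simp
  finally show ?case using ZL_step[OF dz(2) dz(3) q(3)] p(2) by blast
qed

lemma shw_ww: assumes "1 \<le> i" "shw u (ww i)" shows "u \<in> DL"
proof -
  let ?B = "replicate i b"
  have "ww i = [a] @ ?B @ [c] @ [a] @ ?B @ [c]" by (simp add: ww_def w1_def)
  with assms(2) obtain u1 r1 where "u = u1 @ r1" "shw u1 [a]" "shw r1 (?B @ [c] @ [a] @ ?B @ [c])"
    using shw_split by metis
  moreover then obtain u2 r2 where "r1 = u2 @ r2" "shw u2 ?B" "shw r2 ([c] @ [a] @ ?B @ [c])"
    using shw_split by metis
  moreover then obtain u3 r3 where "r2 = u3 @ r3" "shw u3 [c]" "shw r3 ([a] @ ?B @ [c])"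
    using shw_split by metis
  moreover then obtain u4 r4 where "r3 = u4 @ r4" "shw u4 [a]" "shw r4 (?B @ [c])"
    using shw_split by metis
  moreover then obtain u5 u6 where "r4 = u5 @ u6" "shw u5 ?B" "shw u6 [c]"
    using shw_split by metis
  ultimately have u: "u = u1 @ u2 @ u3 @ u4 @ u5 @ u6" and s: "shw u1 [a]" "shw u2 ?B" "shw u3 [c]"
    "shw u4 [a]" "shw u5 ?B" "shw u6 [c]" by auto
  obtain e1 e2 where 1: "u1 = e1 @ a # e2" "e1 \<in> DL" "e2 \<in> DL" using shw_single[OF s(1)] by blast
  obtain e3 e4 where 3: "u3 = e3 @ c # e4" "e3 \<in> DL" "e4 \<in> DL" using shw_single[OF s(3)] by blast
  obtain e5 e6 where 4: "u4 = e5 @ a # e6" "e5 \<in> DL" "e6 \<in> DL" using shw_single[OF s(4)] by blast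
  obtain e7 e8 where 6: "u6 = e7 @ c # e8" "e7 \<in> DL" "e8 \<in> DL" using shw_single[OF s(6)] by blast
  have p: "shw (e2 @ u2 @ e3) ?B"
    using shw_prepend[OF 1(3) shw_append[OF s(2) shw_nil[OF 3(2)]]] by simp
  have q: "shw (e6 @ u5 @ e7) ?B"
    using shw_prepend[OF 4(3) shw_append[OF s(5) shw_nil[OF 6(2)]]] by simp
  have m: "e4 @ e5 \<in> DL" using 3 4 DL_app by blast
  obtain d z where dz: "(e2 @ u2 @ e3) @ c # (e4 @ e5) @ a # (e6 @ u5 @ e7) = d @ z" "d \<in> DL" "z \<in> ZL"
    using Zlem[OF assms(1) p q m] by blast
  have "u = e1 @ (a # ((e2 @ u2 @ e3) @ c # (e4 @ e5) @ a # (e6 @ u5 @ e7)) @ [c]) @ e8"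
    using u 1 3 4 6 by simp
  also have "\<dots> = e1 @ (a # d @ z @ [c]) @ e8" using dz by simp
  finally show ?thesis using DL_T[OF dz(2,3)] 1(2) 6(3) DL_app by metis
qed

lemma shw_red: "1 \<le> i \<Longrightarrow> shw u (t @ ww i) \<Longrightarrow> shw u t"
  by (metis append.right_neutral shw_append shw_nil shw_split shw_ww)

lemma shw_snoc: "shw u z \<Longrightarrow> shw (u @ [x]) (z @ [x])"
  using shw_append[of u z "[x]" "[x]"] shw_cons[OF DL_nil shw_nil[OF DL_nil], of x] by simp

lemma rep_b_eq: "replicate i b @ a # x = replicate j b @ a # y \<Longrightarrow> i = j \<and> x = y"
proof (induction i arbitrary: j)
  case 0 then show ?case by (cases j) auto
next
  case (Suc i) then show ?case by (cases j) auto
qed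

lemma w1_uniq: "s @ w1 i = t @ w1 j \<Longrightarrow> s = t \<and> i = j"
proof -
  assume h: "s @ w1 i = t @ w1 j"
  have "rev (s @ w1 i) = rev (t @ w1 j)" using h by simp
  then have "replicate i b @ a # rev s = replicate j b @ a # rev t" by (simp add: w1_def)
  from rep_b_eq[OF this] show ?thesis by simp
qed

lemma ww_uniq: "s @ ww i = t @ ww j \<Longrightarrow> s = t \<and> i = j"
proof -
  assume "s @ ww i = t @ ww j"
  then have "(s @ w1 i) @ w1 i = (t @ w1 j) @ w1 j" by (simp add: ww_def)
  then have "s @ w1 i = t @ w1 j" using w1_uniq by blast
  then show ?thesis using w1_uniq by blast
qed

definition red :: "gen list \<Rightarrow> bool" where "red s \<longleftrightarrow> (\<exists>i t. 1 \<le> i \<and> s = t @ ww i)"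

definition step :: "gen list \<Rightarrow> gen \<Rightarrow> gen list" where
  "step s x = (if red (s@[x]) then (SOME t. \<exists>i. 1 \<le> i \<and> s@[x] = t @ ww i) else s@[x])"

lemma step_red: "1 \<le> i \<Longrightarrow> s@[x] = t @ ww i \<Longrightarrow> step s x = t"
proof -
  assume h: "1 \<le> i" "s@[x] = t @ ww i"
  then have r: "red (s@[x])" unfolding red_def by blast
  have "\<exists>i. 1 \<le> i \<and> s@[x] = t @ ww i" using h by blast
  from someI[where P = "\<lambda>t. \<exists>i. 1 \<le> i \<and> s@[x] = t @ ww i", OF this]
  obtain j where j: "s@[x] = (SOME t. \<exists>i. 1 \<le> i \<and> s@[x] = t @ ww i) @ ww j" by blast
  have "(SOME t. \<exists>i. 1 \<le> i \<and> s@[x] = t @ ww i) @ ww j = t @ ww i" using j h(2) by simp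
  then have "(SOME t. \<exists>i. 1 \<le> i \<and> s@[x] = t @ ww i) = t" using ww_uniq by blast
  then show ?thesis using r unfolding step_def by simp
qed

lemma step_nored: "\<not> red (s@[x]) \<Longrightarrow> step s x = s@[x]"
  unfolding step_def by simp

lemma ww_snoc: "ww i = w1 i @ a # replicate i b @ [c]" by (simp add: ww_def w1_def)

lemma step_notc: "x \<noteq> c \<Longrightarrow> step s x = s@[x]"
  by (rule step_nored) (auto simp: red_def ww_snoc)

definition irr :: "gen list \<Rightarrow> bool" where "irr s \<longleftrightarrow> \<not> (\<exists>p q i. 1 \<le> i \<and> s = p @ ww i @ q)"

lemma irr_Nil: "irr []" by (auto simp: irr_def ww_def w1_def)

lemma irr_step: "irr s \<Longrightarrow> irr (step s x)"
proof (cases "red (s@[x])")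
  case True
  assume irr: "irr s"
  then obtain i t where it: "1 \<le> i" "s@[x] = t @ ww i" using True red_def by blast
  have "s @ [x] = (t @ w1 i @ a # replicate i b) @ [c]" using it by (simp add: ww_snoc)
  then have s: "s = t @ w1 i @ a # replicate i b" by simp
  have "irr t" using irr unfolding irr_def s by (metis append.assoc)
  then show ?thesis using step_red[OF it] by simp
next
  case False
  assume irr: "irr s"
  show ?thesis unfolding step_nored[OF False] irr_def
  proof
    assume "\<exists>p q i. 1 \<le> i \<and> s @ [x] = p @ ww i @ q"
    then obtain p q i where h: "1 \<le> i" "s @ [x] = p @ ww i @ q" by blast
    show False
    proof (cases q rule: rev_cases)
      case Nil then show False using h False red_def by auto
    next
      case (snoc q' y)
      then have "s = p @ ww i @ q'" using h by (metis append.assoc append1_eq_conv)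
      then show False using irr h irr_def by blast
    qed
  qed
qed

lemma irr_foldl: "irr s \<Longrightarrow> irr (foldl step s xs)"
  by (induction xs arbitrary: s) (auto intro: irr_step)

lemma foldl_bs: "foldl step s (replicate k b) = s @ replicate k b"
  by (induction k arbitrary: s) (auto simp: step_notc replicate_append_same[symmetric] simp del: replicate_append_same)

lemma foldl_w1pre: "foldl step s (a # replicate k b) = s @ a # replicate k b"
  by (simp add: step_notc foldl_bs)

lemma foldl_ww: assumes "irr s" "1 \<le> i" shows "foldl step s (ww i) = s"
proof -
  have ww: "ww i = (a # replicate i b) @ c # (a # replicate i b) @ [c]" by (simp add: ww_def w1_def)
  let ?s1 = "step (s @ a # replicate i b) c"
  have "foldl step s (ww i) = step (?s1 @ a # replicate i b) c"
    unfolding ww by (simp add: step_notc foldl_bs)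
  also have "\<dots> = s"
  proof (cases "red (s @ w1 i)")
    case True
    then obtain j t where jt: "1 \<le> j" "s @ w1 i = t @ ww j" using red_def by blast
    then have "s @ w1 i = (t @ w1 j) @ w1 j" by (simp add: ww_def)
    then have st: "s = t @ w1 j" "i = j" using w1_uniq[of s i "t @ w1 j" j] by simp_all
    have e1: "(s @ a # replicate i b) @ [c] = t @ ww j" using jt(2) by (simp add: w1_def)
    have s1: "?s1 = t" by (rule step_red[OF jt(1) e1])
    have nr: "\<not> red (t @ w1 i)"
    proof
      assume "red (t @ w1 i)"
      then obtain k t' where k: "1 \<le> k" "t @ w1 i = t' @ ww k" using red_def by blast
      have "s = t' @ ww k @ []" using k(2) st by simp
      then show False using assms(1) k(1) unfolding irr_def by blast
    qed
    have e2: "(t @ a # replicate i b) @ [c] = t @ w1 i" by (simp add: w1_def)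
    have "step (t @ a # replicate i b) c = t @ w1 i"
      using step_nored[of "t @ a # replicate i b" c] nr e2 by simp
    then show ?thesis using s1 st by simp
  next
    case False
    then have s1: "?s1 = s @ w1 i" using step_nored by (simp add: w1_def)
    show ?thesis unfolding s1 by (rule step_red[OF assms(2)]) (simp add: ww_def w1_def)
  qed
  finally show ?thesis .
qed

definition nf :: "gen list \<Rightarrow> gen list" where "nf u = foldl step [] u"

lemma nf_ww: "1 \<le> i \<Longrightarrow> nf (x @ ww i @ y) = nf (x @ y)"
  unfolding nf_def by (simp add: foldl_ww irr_foldl irr_Nil)

lemma peq_nf: "peq u v \<Longrightarrow> nf u = nf v"
  by (induction rule: pres_eq.induct) (auto simp: Pi2_rels_ww nf_ww)

lemma shw_nf: "shw u (nf u)"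
proof (induction u rule: rev_induct)
  case Nil then show ?case by (simp add: nf_def shw_nil DL_nil)
next
  case (snoc x u)
  have e: "nf (u @ [x]) = step (nf u) x" by (simp add: nf_def)
  have sn: "shw (u @ [x]) (nf u @ [x])" using shw_snoc[OF snoc] .
  show ?case
  proof (cases "red (nf u @ [x])")
    case True
    then obtain i t where "1 \<le> i" "nf u @ [x] = t @ ww i" using red_def by blast
    then show ?thesis using e sn step_red shw_red by metis
  next
    case False then show ?thesis using e sn step_nored by simp
  qed
qed

lemma peq_char: "peq u v \<longleftrightarrow> (\<exists>z. shw u z \<and> shw v z)"
proof
  assume "peq u v" then show "\<exists>z. shw u z \<and> shw v z" using shw_nf peq_nf by metis
next
  assume "\<exists>z. shw u z \<and> shw v z"
  then show "peq u v" using shw_sound pres_eq.sym pres_eq.trans by metis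
qed

inductive gs :: "'t prod set \<Rightarrow> (nat + 't) list \<Rightarrow> 't list \<Rightarrow> bool" for P where
  gs_nil: "gs P [] []"
| gs_t: "gs P \<alpha> w \<Longrightarrow> gs P (Inr t # \<alpha>) (t # w)"
| gs_n: "(A, \<beta>) \<in> P \<Longrightarrow> gs P \<beta> u \<Longrightarrow> gs P \<alpha> w \<Longrightarrow> gs P (Inl A # \<alpha>) (u @ w)"

lemma gs_app: "gs P \<alpha> u \<Longrightarrow> gs P \<beta> v \<Longrightarrow> gs P (\<alpha> @ \<beta>) (u @ v)"
proof (induction rule: gs.induct)
  case (gs_n A \<beta>' u \<alpha> w)
  then show ?case using gs.gs_n[OF gs_n(1,2) gs_n(5)] by simp
qed (auto intro: gs.intros)

lemma gs_split: "gs P (\<alpha> @ \<beta>) w \<Longrightarrow> \<exists>u v. w = u @ v \<and> gs P \<alpha> u \<and> gs P \<beta> v"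
proof (induction \<alpha> arbitrary: w)
  case Nil then show ?case using gs_nil by fastforce
next
  case (Cons x \<alpha>)
  show ?case
  proof (cases x)
    case (Inl A)
    from Cons.prems obtain \<beta>' u w' where "(A, \<beta>') \<in> P" "gs P \<beta>' u" "gs P (\<alpha> @ \<beta>) w'" "w = u @ w'"
      unfolding Inl by (auto elim: gs.cases)
    with Cons.IH show ?thesis unfolding Inl by (metis append.assoc gs_n)
  next
    case (Inr t)
    from Cons.prems obtain w' where "gs P (\<alpha> @ \<beta>) w'" "w = t # w'"
      unfolding Inr by (auto elim: gs.cases)
    with Cons.IH show ?thesis unfolding Inr by (metis append_Cons gs_t)
  qed
qed

lemma gs_map: "gs P (map Inr w) w"
  by (induction w) (auto intro: gs.intros)

lemma derive1_gs: "derive1 P \<alpha> \<beta> \<Longrightarrow> gs P \<beta> w \<Longrightarrow> gs P \<alpha> w"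
proof -
  assume "derive1 P \<alpha> \<beta>" "gs P \<beta> w"
  then obtain x y A \<gamma> where d: "\<alpha> = x @ [Inl A] @ y" "(A, \<gamma>) \<in> P" "\<beta> = x @ \<gamma> @ y" "gs P (x @ \<gamma> @ y) w"
    unfolding derive1_def by blast
  obtain w1 r where r: "w = w1 @ r" "gs P x w1" "gs P (\<gamma> @ y) r" using gs_split d(4) by blast
  obtain w2 w3 where r2: "r = w2 @ w3" "gs P \<gamma> w2" "gs P y w3" using gs_split r(3) by blast
  have "gs P ([Inl A] @ y) (w2 @ w3)" using gs_n[OF d(2) r2(2) r2(3)] by simp
  then show ?thesis using gs_app[OF r(2)] d(1) r r2 by simp
qed

lemma derives_gs: "(derive1 P)\<^sup>*\<^sup>* \<alpha> \<beta> \<Longrightarrow> gs P \<beta> w \<Longrightarrow> gs P \<alpha> w"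
  by (induction rule: converse_rtranclp_induct) (auto intro: derive1_gs)

lemma derive1_ctx: "derive1 P u v \<Longrightarrow> derive1 P (x @ u @ y) (x @ v @ y)"
  unfolding derive1_def by (metis append.assoc)

lemma derives_ctx: "(derive1 P)\<^sup>*\<^sup>* u v \<Longrightarrow> (derive1 P)\<^sup>*\<^sup>* (x @ u @ y) (x @ v @ y)"
  by (induction rule: rtranclp_induct) (auto intro: rtranclp.rtrancl_into_rtrancl derive1_ctx)

lemma gs_derives: "gs P \<alpha> w \<Longrightarrow> (derive1 P)\<^sup>*\<^sup>* \<alpha> (map Inr w)"
proof (induction rule: gs.induct)
  case gs_nil then show ?case by simp
next
  case (gs_t \<alpha> w t)
  then show ?case using derives_ctx[OF gs_t.IH, of "[Inr t]" "[]"] by simp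
next
  case (gs_n A \<beta> u \<alpha> w)
  have 1: "derive1 P (Inl A # \<alpha>) (\<beta> @ \<alpha>)"
    unfolding derive1_def using gs_n.hyps(1) by (intro exI[of _ "[]"] exI[of _ \<alpha>] exI[of _ A] exI[of _ \<beta>]) auto
  have 2: "(derive1 P)\<^sup>*\<^sup>* (\<beta> @ \<alpha>) (map Inr u @ \<alpha>)" using derives_ctx[OF gs_n.IH(1), of "[]" \<alpha>] by simp
  have 3: "(derive1 P)\<^sup>*\<^sup>* (map Inr u @ \<alpha>) (map Inr u @ map Inr w)"
    using derives_ctx[OF gs_n.IH(2), of "map Inr u" "[]"] by simp
  show ?case using 1 2 3 by (simp add: converse_rtranclp_into_rtranclp rtranclp_trans)
qed

lemma cfg_lang_gs: "cfg_lang P S = {w. gs P [Inl S] w}"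
  unfolding cfg_lang_def using gs_derives derives_gs gs_map by blast

fun gsem :: "(nat \<Rightarrow> 't list set) \<Rightarrow> (nat + 't) list \<Rightarrow> 't list \<Rightarrow> bool" where
  "gsem I [] w = (w = [])"
| "gsem I (Inr t # \<alpha>) w = (\<exists>w'. w = t # w' \<and> gsem I \<alpha> w')"
| "gsem I (Inl n # \<alpha>) w = (\<exists>u v. w = u @ v \<and> u \<in> I n \<and> gsem I \<alpha> v)"

lemma gs_sound: assumes H: "\<And>A \<beta> u. (A, \<beta>) \<in> P \<Longrightarrow> gsem I \<beta> u \<Longrightarrow> u \<in> I A"
  shows "gs P \<alpha> w \<Longrightarrow> gsem I \<alpha> w"
  by (induction rule: gs.induct) (auto intro: H)

lemma gs_single: "(A, \<beta>) \<in> P \<Longrightarrow> gs P \<beta> u \<Longrightarrow> gs P [Inl A] u"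
  using gs_n[OF _ _ gs_nil] by fastforce

abbreviation G :: "gen \<Rightarrow> nat + gen wp_sym" where "G x \<equiv> Inr (Gen x)"
abbreviation N :: "nat \<Rightarrow> nat + gen wp_sym" where "N n \<equiv> Inl n"

definition Pg :: "gen wp_sym prod set" where
  "Pg = {(5,[]), (5,[N 5,N 5]), (5,[G a,N 5,N 2,G c]),
         (2,[G b,N 5,G c,N 5,G a,N 5,G b,N 5]), (2,[G b,N 5,N 2,G b,N 5]),
         (3,[]), (3,[N 3,N 3]), (3,[G c,N 4,N 3,G a]),
         (4,[N 3,G b,N 3,G a,N 3,G c,N 3,G b]), (4,[N 3,G b,N 4,N 3,G b]),
         (0,[N 5,G a,N 0,G a,N 3]), (0,[N 5,G b,N 0,G b,N 3]), (0,[N 5,G c,N 0,G c,N 3]),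
         (0,[N 5,Inr Hash,N 3])}"

lemma finite_Pg: "finite Pg" unfolding Pg_def by simp

definition WPT :: "gen wp_sym list set" where
  "WPT = {map Gen u @ [Hash] @ rev (map Gen v) | u v. \<exists>z. shw u z \<and> shw v z}"

definition Isem :: "nat \<Rightarrow> gen wp_sym list set" where
  "Isem n = (if n = 0 then WPT else if n = 5 then map Gen ` DL else if n = 2 then map Gen ` ZL
     else if n = 3 then (\<lambda>d. rev (map Gen d)) ` DL else (\<lambda>d. rev (map Gen d)) ` ZL)"

abbreviation rg :: "gen list \<Rightarrow> gen wp_sym list" where "rg x \<equiv> rev (map Gen x)"

lemma I5: "x \<in> DL \<Longrightarrow> u = map Gen x \<Longrightarrow> u \<in> Isem 5"
  using imageI[of x DL "map Gen"] by (simp add: Isem_def)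
lemma I2: "x \<in> ZL \<Longrightarrow> u = map Gen x \<Longrightarrow> u \<in> Isem 2"
  using imageI[of x ZL "map Gen"] by (simp add: Isem_def)
lemma I3: "x \<in> DL \<Longrightarrow> u = rg x \<Longrightarrow> u \<in> Isem 3"
  using imageI[of x DL rg] by (simp add: Isem_def)
lemma I4: "x \<in> ZL \<Longrightarrow> u = rg x \<Longrightarrow> u \<in> Isem 4"
  using imageI[of x ZL rg] by (simp add: Isem_def)

lemma Isem5: "u \<in> Isem 5 \<longleftrightarrow> (\<exists>x\<in>DL. u = map Gen x)" by (auto simp: Isem_def)
lemma Isem2: "u \<in> Isem 2 \<longleftrightarrow> (\<exists>x\<in>ZL. u = map Gen x)" by (auto simp: Isem_def)
lemma Isem3: "u \<in> Isem 3 \<longleftrightarrow> (\<exists>x\<in>DL. u = rg x)" by (auto simp: Isem_def)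
lemma Isem4: "u \<in> Isem 4 \<longleftrightarrow> (\<exists>x\<in>ZL. u = rg x)" by (auto simp: Isem_def)
lemma Isem0: "u \<in> Isem 0 \<longleftrightarrow> u \<in> WPT" by (auto simp: Isem_def)

lemmas Isems = Isem5 Isem2 Isem3 Isem4 Isem0

lemma ps1: "gsem Isem [] u \<Longrightarrow> u \<in> Isem 5" by (auto intro: I5[OF DL_nil])
lemma ps2: "gsem Isem [N 5, N 5] u \<Longrightarrow> u \<in> Isem 5"
proof -
  assume "gsem Isem [N 5, N 5] u"
  then obtain x y where "x \<in> DL" "y \<in> DL" "u = map Gen x @ map Gen y" by (auto simp: Isems)
  then show ?thesis by (intro I5[OF DL_app[of x y]]) auto
qed
lemma ps3: "gsem Isem [G a, N 5, N 2, G c] u \<Longrightarrow> u \<in> Isem 5"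
proof -
  assume "gsem Isem [G a, N 5, N 2, G c] u"
  then obtain d z where "d \<in> DL" "z \<in> ZL" "u = Gen a # map Gen d @ map Gen z @ [Gen c]" by (auto simp: Isems)
  then show ?thesis by (intro I5[OF DL_T[of d z]]) auto
qed
lemma ps4: "gsem Isem [G b,N 5,G c,N 5,G a,N 5,G b,N 5] u \<Longrightarrow> u \<in> Isem 2"
proof -
  assume "gsem Isem [G b,N 5,G c,N 5,G a,N 5,G b,N 5] u"
  then obtain x1 x2 x3 x4 where "x1 \<in> DL" "x2 \<in> DL" "x3 \<in> DL" "x4 \<in> DL"
    "u = Gen b # map Gen x1 @ Gen c # map Gen x2 @ Gen a # map Gen x3 @ Gen b # map Gen x4" by (auto simp: Isems)
  then show ?thesis by (intro I2[OF ZL_base[of x1 x2 x3 x4]]) auto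
qed
lemma ps5: "gsem Isem [G b,N 5,N 2,G b,N 5] u \<Longrightarrow> u \<in> Isem 2"
proof -
  assume "gsem Isem [G b,N 5,N 2,G b,N 5] u"
  then obtain x z y where "x \<in> DL" "z \<in> ZL" "y \<in> DL"
    "u = Gen b # map Gen x @ map Gen z @ Gen b # map Gen y" by (auto simp: Isems)
  then show ?thesis by (intro I2[OF ZL_step[of x z y]]) auto
qed
lemma ps6: "gsem Isem [] u \<Longrightarrow> u \<in> Isem 3" by (auto intro: I3[OF DL_nil])
lemma ps7: "gsem Isem [N 3, N 3] u \<Longrightarrow> u \<in> Isem 3"
proof -
  assume "gsem Isem [N 3, N 3] u"
  then obtain x y where "x \<in> DL" "y \<in> DL" "u = rg x @ rg y" by (auto simp: Isems)
  then show ?thesis by (intro I3[OF DL_app[of y x]]) auto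
qed
lemma ps8: "gsem Isem [G c,N 4,N 3,G a] u \<Longrightarrow> u \<in> Isem 3"
proof -
  assume "gsem Isem [G c,N 4,N 3,G a] u"
  then obtain z d where "z \<in> ZL" "d \<in> DL" "u = Gen c # rg z @ rg d @ [Gen a]" by (auto simp: Isems)
  then show ?thesis by (intro I3[OF DL_T[of d z]]) auto
qed
lemma ps9: "gsem Isem [N 3,G b,N 3,G a,N 3,G c,N 3,G b] u \<Longrightarrow> u \<in> Isem 4"
proof -
  assume "gsem Isem [N 3,G b,N 3,G a,N 3,G c,N 3,G b] u"
  then obtain x1 x2 x3 x4 where "x1 \<in> DL" "x2 \<in> DL" "x3 \<in> DL" "x4 \<in> DL"
    "u = rg x1 @ Gen b # rg x2 @ Gen a # rg x3 @ Gen c # rg x4 @ [Gen b]" by (auto simp: Isems)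
  then show ?thesis by (intro I4[OF ZL_base[of x4 x3 x2 x1]]) auto
qed
lemma ps10: "gsem Isem [N 3,G b,N 4,N 3,G b] u \<Longrightarrow> u \<in> Isem 4"
proof -
  assume "gsem Isem [N 3,G b,N 4,N 3,G b] u"
  then obtain x z y where "x \<in> DL" "z \<in> ZL" "y \<in> DL"
    "u = rg x @ Gen b # rg z @ rg y @ [Gen b]" by (auto simp: Isems)
  then show ?thesis by (intro I4[OF ZL_step[of y z x]]) auto
qed
lemma psS: "gsem Isem [N 5,G x,N 0,G x,N 3] u \<Longrightarrow> u \<in> Isem 0"
proof -
  assume "gsem Isem [N 5,G x,N 0,G x,N 3] u"
  then obtain d w d' where h: "d \<in> DL" "w \<in> WPT" "d' \<in> DL" "u = map Gen d @ Gen x # w @ Gen x # rg d'"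
    by (auto simp: Isems)
  from h(2) obtain u' v' z where w: "w = map Gen u' @ [Hash] @ rg v'" "shw u' z" "shw v' z"
    unfolding WPT_def by blast
  have "u = map Gen (d @ x # u') @ [Hash] @ rg (d' @ x # v')" using h w by simp
  moreover have "shw (d @ x # u') (x # z)" "shw (d' @ x # v') (x # z)" using h w by (auto intro: shw_cons)
  ultimately show ?thesis unfolding Isem0 WPT_def by blast
qed
lemma psH: "gsem Isem [N 5,Inr Hash,N 3] u \<Longrightarrow> u \<in> Isem 0"
proof -
  assume "gsem Isem [N 5,Inr Hash,N 3] u"
  then obtain d d' where h: "d \<in> DL" "d' \<in> DL" "u = map Gen d @ [Hash] @ rg d'"
    by (auto simp: Isems)
  moreover have "shw d []" "shw d' []" using h by (auto intro: shw_nil)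
  ultimately show ?thesis unfolding Isem0 WPT_def by blast
qed

lemma prod_sound: "(A, \<beta>) \<in> Pg \<Longrightarrow> gsem Isem \<beta> u \<Longrightarrow> u \<in> Isem A"
  unfolding Pg_def
  by (auto dest: ps1 ps2 ps3 ps4 ps5 ps6 ps7 ps8 ps9 ps10 psS psH simp del: gsem.simps)

lemma Pmem:
  shows "(5,[]) \<in> Pg"
    and "(5,[N 5,N 5]) \<in> Pg"
    and "(5,[G a,N 5,N 2,G c]) \<in> Pg"
    and "(2,[G b,N 5,G c,N 5,G a,N 5,G b,N 5]) \<in> Pg"
    and "(2,[G b,N 5,N 2,G b,N 5]) \<in> Pg"
    and "(3,[]) \<in> Pg"
    and "(3,[N 3,N 3]) \<in> Pg"
    and "(3,[G c,N 4,N 3,G a]) \<in> Pg"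
    and "(4,[N 3,G b,N 3,G a,N 3,G c,N 3,G b]) \<in> Pg"
    and "(4,[N 3,G b,N 4,N 3,G b]) \<in> Pg"
    and "(0,[N 5,Inr Hash,N 3]) \<in> Pg"
  unfolding Pg_def by simp_all

lemma gs_tt: "gs P [Inr t] [t]" by (auto intro: gs.intros)

lemma comp:
  shows "d \<in> DL \<Longrightarrow> gs Pg [N 5] (map Gen d) \<and> gs Pg [N 3] (rev (map Gen d))"
    and "z \<in> ZL \<Longrightarrow> gs Pg [N 2] (map Gen z) \<and> gs Pg [N 4] (rev (map Gen z))"
proof (induction rule: DL_ZL.inducts)
  case DL_nil
  then show ?case using gs_single[OF Pmem(1) gs_nil] gs_single[OF Pmem(6) gs_nil] by simp
next
  case (DL_app x y)
  have 1: "gs Pg ([N 5] @ [N 5]) (map Gen x @ map Gen y)" using DL_app by (intro gs_app) auto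
  have 3: "gs Pg ([N 3] @ [N 3]) (rev (map Gen y) @ rev (map Gen x))" using DL_app by (intro gs_app) auto
  show ?case using 1 3 by (auto intro!: gs_single[OF Pmem(2)] gs_single[OF Pmem(7)])
next
  case (DL_T d z)
  have 1: "gs Pg ([G a] @ [N 5] @ [N 2] @ [G c]) ([Gen a] @ map Gen d @ map Gen z @ [Gen c])"
    using DL_T by (intro gs_app gs_tt) auto
  have 3: "gs Pg ([G c] @ [N 4] @ [N 3] @ [G a]) ([Gen c] @ rev (map Gen z) @ rev (map Gen d) @ [Gen a])"
    using DL_T by (intro gs_app gs_tt) auto
  show ?case using 1 3 by (auto intro!: gs_single[OF Pmem(3)] gs_single[OF Pmem(8)])
next
  case (ZL_base d1 d2 d3 d4)
  have 1: "gs Pg ([G b] @ [N 5] @ [G c] @ [N 5] @ [G a] @ [N 5] @ [G b] @ [N 5])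
     ([Gen b] @ map Gen d1 @ [Gen c] @ map Gen d2 @ [Gen a] @ map Gen d3 @ [Gen b] @ map Gen d4)"
    using ZL_base by (intro gs_app gs_tt) auto
  have 3: "gs Pg ([N 3] @ [G b] @ [N 3] @ [G a] @ [N 3] @ [G c] @ [N 3] @ [G b])
     (rev (map Gen d4) @ [Gen b] @ rev (map Gen d3) @ [Gen a] @ rev (map Gen d2) @ [Gen c] @ rev (map Gen d1) @ [Gen b])"
    using ZL_base by (intro gs_app gs_tt) auto
  show ?case using 1 3 by (auto intro!: gs_single[OF Pmem(4)] gs_single[OF Pmem(9)])
next
  case (ZL_step d1 z d2)
  have 1: "gs Pg ([G b] @ [N 5] @ [N 2] @ [G b] @ [N 5])
     ([Gen b] @ map Gen d1 @ map Gen z @ [Gen b] @ map Gen d2)"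
    using ZL_step by (intro gs_app gs_tt) auto
  have 3: "gs Pg ([N 3] @ [G b] @ [N 4] @ [N 3] @ [G b])
     (rev (map Gen d2) @ [Gen b] @ rev (map Gen z) @ rev (map Gen d1) @ [Gen b])"
    using ZL_step by (intro gs_app gs_tt) auto
  show ?case using 1 3 by (auto intro!: gs_single[OF Pmem(5)] gs_single[OF Pmem(10)])
qed

lemma S_comp: "shw u z \<Longrightarrow> shw v z \<Longrightarrow> gs Pg [N 0] (map Gen u @ Hash # rev (map Gen v))"
proof (induction arbitrary: v rule: shw.induct)
  case (shw_nil d)
  then have d': "v \<in> DL" using shw_DL by blast
  have 1: "gs Pg ([N 5] @ [Inr Hash] @ [N 3]) (map Gen d @ [Hash] @ rev (map Gen v))"
    using comp(1)[OF shw_nil(1)] comp(1)[OF d'] by (intro gs_app gs_tt) auto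
  show ?case using 1 by (auto intro!: gs_single[OF Pmem(11)])
next
  case (shw_cons d w z x)
  from shw_cons.prems obtain d' v' where v: "v = d' @ x # v'" "d' \<in> DL" "shw v' z"
    by (auto elim: shw.cases)
  have 1: "gs Pg ([N 5] @ [G x] @ [N 0] @ [G x] @ [N 3])
     (map Gen d @ [Gen x] @ (map Gen w @ Hash # rev (map Gen v')) @ [Gen x] @ rev (map Gen d'))"
    using comp(1)[OF shw_cons(1)] comp(1)[OF v(2)] shw_cons.IH[OF v(3)] by (intro gs_app gs_tt) auto
  have P: "(0, [N 5, G x, N 0, G x, N 3]) \<in> Pg" by (cases x) (auto simp: Pg_def)
  show ?case using gs_single[OF P] 1 v(1) by simp
qed

lemma gs0_gsem: "gs Pg [N 0] w \<Longrightarrow> gsem Isem [N 0] w"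
  by (rule gs_sound[where I=Isem and P=Pg, OF prod_sound])

lemma gs0_WPT: "gs Pg [N 0] w \<Longrightarrow> w \<in> WPT"
proof -
  assume h: "gs Pg [N 0] w"
  have "gsem Isem [N 0] w" using h by (rule gs0_gsem)
  then have "\<exists>u v. w = u @ v \<and> u \<in> Isem 0 \<and> v = []" by (simp only: gsem.simps)
  then have "w \<in> Isem 0" by auto
  then show "w \<in> WPT" by (simp only: Isem0)
qed

theorem mainTheorem3:
  shows "context_free (word_problem Pi2_rels)"
proof -
  have "word_problem Pi2_rels = cfg_lang Pg 0"
  proof
    show "word_problem Pi2_rels \<subseteq> cfg_lang Pg 0"
    proof
      fix w assume "w \<in> word_problem Pi2_rels"
      then obtain u v where w: "w = map Gen u @ [Hash] @ rev (map Gen v)" "peq u v"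
        unfolding word_problem_def by (auto simp only: mem_Collect_eq)
      then obtain z where "shw u z" "shw v z" using peq_char[of u v] by blast
      then have "gs Pg [N 0] (map Gen u @ Hash # rev (map Gen v))" by (rule S_comp)
      then have "gs Pg [N 0] w" using w(1) by simp
      then show "w \<in> cfg_lang Pg 0" by (simp add: cfg_lang_gs)
    qed
  next
    show "cfg_lang Pg 0 \<subseteq> word_problem Pi2_rels"
    proof
      fix w assume "w \<in> cfg_lang Pg 0"
      then have "gs Pg [N 0] w" by (simp add: cfg_lang_gs)
      then have "w \<in> WPT" by (rule gs0_WPT)
      then obtain u v z where "w = map Gen u @ [Hash] @ rev (map Gen v)" "shw u z" "shw v z"
        unfolding WPT_def by blast
      moreover have "peq u v" using peq_char[of u v] calculation(2,3) by blast
      ultimately show "w \<in> word_problem Pi2_rels"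
        unfolding word_problem_def mem_Collect_eq by (intro exI conjI)
    qed
  qed
  then show ?thesis unfolding context_free_def
    by (intro exI[of _ Pg] exI[of _ 0] conjI finite_Pg)
qed

end
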